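(* Let $P(x)=\frac{p_{-1}}{x-x_0}+p_0+p_1(x-x_0)+\dots$ and $Q(x)=\frac{q_{-1}}{x-x_0}+q_0+q_1(x-x_0)+\dots$ be $n\times n$ matrix functions holomorphic and single-valued in a punctured disc around $x_0$. If for every $\rho\in\mathbb C$ the point $x_0$ is a strong regular point of the system $\frac{dW(x,\rho)}{dx}=[P(x)+\rho Q(x)]W(x,\rho)$, then for every $\rho\in\mathbb C$ all eigenvalues of $p_{-1}+\rho q_{-1}$ are integers, and the set of eigenvalues of $p_{-1}+\rho q_{-1}$ does not depend on $\rho$.
   Context: For a system $\frac{dW}{dx}=A(x)W$ with $A$ holomorphic and single-valued in a punctured disc around $x_0$, every fundamental (invertible matrix) solution has the form $W(x)=S(x)(x-x_0)^{\Phi}$ with $S$ holomorphic and single-valued in the punctured disc and $\Phi$ a constant matrix. The point $x_0$ is called strong regular for the system if a fundamental solution $W$ is single-valued in the punctured disc and has at most a pole at $x_0$, i.e. $W(x)=\sum_{k\ge m}b_k(x-x_0)^k$ for some $m\in\mathbb Z$. *)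

theory Defs
  imports "HOL-Complex_Analysis.Complex_Analysis"
begin

definition mat_holomorphic_on ::
  "(complex \<Rightarrow> complex^'n^'n) \<Rightarrow> complex set \<Rightarrow> bool" where
  "mat_holomorphic_on F S \<longleftrightarrow> (\<forall>i j. (\<lambda>x. F x $ i $ j) holomorphic_on S)"

definition mscale :: "complex \<Rightarrow> complex^'n^'n \<Rightarrow> complex^'n^'n" where
  "mscale c M = (\<chi> i j. c * M $ i $ j)"

definition mat_eigenvalue :: "complex^'n^'n \<Rightarrow> complex \<Rightarrow> bool" where
  "mat_eigenvalue M l \<longleftrightarrow> (\<exists>v. v \<noteq> 0 \<and> M *v v = l *s v)"

definition fundamental_solution_on ::
  "(complex \<Rightarrow> complex^'n^'n) \<Rightarrow> (complex \<Rightarrow> complex^'n^'n) \<Rightarrow> complex set \<Rightarrow> bool" where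
  "fundamental_solution_on A W S \<longleftrightarrow>
     (\<forall>x\<in>S. invertible (W x) \<and>
        (\<forall>i j. ((\<lambda>y. W y $ i $ j) has_field_derivative ((A x ** W x) $ i $ j)) (at x)))"

text \<open>x0 is a strong regular point of dW/dx = A(x) W: on some punctured disc around x0
  there is a single-valued fundamental solution having at most a pole at x0
  (each entry has a non-essential singularity at x0).\<close>
definition strong_regular_point ::
  "(complex \<Rightarrow> complex^'n^'n) \<Rightarrow> complex \<Rightarrow> bool" where
  "strong_regular_point A x0 \<longleftrightarrow>
     (\<exists>r>0. \<exists>W. fundamental_solution_on A W (ball x0 r - {x0}) \<and>
        (\<forall>i j. not_essential (\<lambda>x. W x $ i $ j) x0))"

end

theory Submission
  imports Defs "HOL-Computational_Algebra.Polynomial"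
begin

definition ordge :: "(int \<Rightarrow> complex^'n^'n) \<Rightarrow> complex^'n \<Rightarrow> int \<Rightarrow> bool" where
  "ordge B c m \<longleftrightarrow> (\<forall>k<m. B k *v c = 0)"

lemma mv_sum: "(A::'a::comm_ring_1^'n^'m) *v (\<Sum>i\<in>I. f i) = (\<Sum>i\<in>I. A *v f i)"
  by (induct I rule: infinite_finite_induct) (auto simp: matrix_vector_right_distrib)

lemma mv_scale: "(A::'a::comm_ring_1^'n^'m) *v (c *s x) = c *s (A *v x)"
  by (simp add: vec_eq_iff matrix_vector_mult_def sum_distrib_left algebra_simps)

lemma mv_scaleR: "(A::complex^'n^'m) *v (c *\<^sub>R x) = c *\<^sub>R (A *v x)"
  by (simp add: vec_eq_iff matrix_vector_mult_def scaleR_sum_right mult_scaleR_right)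

lemma sum_smult: "(\<Sum>i\<in>I. f i) = (0::'a::comm_ring_1^'n) \<Longrightarrow> (\<Sum>i\<in>I. c *s f i) = 0"
proof -
  assume "(\<Sum>i\<in>I. f i) = 0"
  moreover have "(\<Sum>i\<in>I. c *s f i) = c *s (\<Sum>i\<in>I. f i)"
    by (induct I rule: infinite_finite_induct) (auto simp: vector_ssub_ldistrib vec_eq_iff algebra_simps)
  ultimately show ?thesis by simp
qed

lemma bound_exists:
  fixes B :: "int \<Rightarrow> complex^'n^'n"
  assumes K2: "\<And>c. c \<noteq> 0 \<Longrightarrow> \<exists>k. B k *v c \<noteq> 0"
  shows "\<exists>M. \<forall>c \<mu>. c \<noteq> 0 \<longrightarrow> ordge B c \<mu> \<longrightarrow> \<mu> \<le> M"
proof -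
  have lin: "linear (\<lambda>c. B k *v c)" for k
    by (rule linearI) (simp_all add: matrix_vector_right_distrib mv_scaleR)
  hence cont: "continuous_on UNIV (\<lambda>c. B k *v c)" for k
    by (simp add: linear_continuous_on linear_conv_bounded_linear)
  have opn: "open {c. B k *v c \<noteq> 0}" for k
    by (rule open_Collect_neq[OF cont]) simp
  have cov: "sphere (0::complex^'n) 1 \<subseteq> (\<Union>k\<in>UNIV. {c. B k *v c \<noteq> 0})"
  proof
    fix c :: "complex^'n" assume "c \<in> sphere 0 1"
    hence "c \<noteq> 0" by auto
    then show "c \<in> (\<Union>k\<in>UNIV. {c. B k *v c \<noteq> 0})" using K2 by blast
  qed
  obtain D where D: "finite D" "sphere (0::complex^'n) 1 \<subseteq> (\<Union>k\<in>D. {c. B k *v c \<noteq> 0})"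
  proof (rule compactE_image[of "sphere (0::complex^'n) 1" UNIV "\<lambda>k. {c. B k *v c \<noteq> 0}"])
    show "compact (sphere (0::complex^'n) 1)" by (rule compact_sphere)
    show "\<And>T. T \<in> UNIV \<Longrightarrow> open {c. B T *v c \<noteq> 0}" by (rule opn)
    show "sphere (0::complex^'n) 1 \<subseteq> (\<Union>k\<in>UNIV. {c. B k *v c \<noteq> 0})" by (rule cov)
    fix C' assume "C' \<subseteq> UNIV" "finite C'" "sphere (0::complex^'n) 1 \<subseteq> (\<Union>k\<in>C'. {c. B k *v c \<noteq> 0})"
    then show thesis using that by blast
  qed
  define M where "M = Max (insert 0 D)"
  have "\<mu> \<le> M" if c: "c \<noteq> 0" and o: "ordge B c \<mu>" for c \<mu>
  proof -
    define c' where "c' = (1 / norm c) *\<^sub>R c"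
    have "c' \<in> sphere 0 1" using c by (simp add: c'_def)
    then obtain k where k: "k \<in> D" "B k *v c' \<noteq> 0" using D by blast
    hence "B k *v c \<noteq> 0" by (auto simp: c'_def mv_scaleR)
    hence "\<mu> \<le> k" using o unfolding ordge_def by (meson not_le)
    also have "k \<le> M" unfolding M_def using D(1) k(1) by (intro Max_ge) auto
    finally show ?thesis .
  qed
  then show ?thesis by blast
qed

lemma level_reduce:
  fixes v :: "'n::finite \<Rightarrow> complex^'n" and x :: "'n \<Rightarrow> complex" and m :: "'n \<Rightarrow> int" and R :: "complex^'n^'n"
  assumes ev: "\<And>i. R *v v i = of_int (m i) *s v i"
  shows "(\<exists>i. x i \<noteq> 0) \<Longrightarrow> (\<Sum>i\<in>UNIV. x i *s v i) = 0 \<Longrightarrow>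
     \<exists>x' \<mu>. (\<exists>i. x' i \<noteq> 0) \<and> (\<Sum>i\<in>UNIV. x' i *s v i) = 0 \<and> (\<forall>i. x' i \<noteq> 0 \<longrightarrow> m i = \<mu>)"
proof (induction "card (m ` {i. x i \<noteq> 0})" arbitrary: x rule: less_induct)
  case less
  define T where "T = m ` {i. x i \<noteq> 0}"
  have finT: "finite T" by (simp add: T_def)
  have Tne: "T \<noteq> {}" using less.prems(1) by (auto simp: T_def)
  show ?case
  proof (cases "card T \<le> 1")
    case True
    obtain \<mu> where mu: "\<mu> \<in> T" using Tne by blast
    have all: "\<forall>a1\<in>T. \<forall>a2\<in>T. a1 = a2"
      using True card_le_Suc0_iff_eq[OF finT] by simp
    have "m i = \<mu>" if "x i \<noteq> 0" for i
    proof -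
      have "m i \<in> T" using that by (simp add: T_def)
      then show ?thesis using all mu by blast
    qed
    then show ?thesis using less.prems by blast
  next
    case False
    obtain \<mu>0 where mu0: "\<mu>0 \<in> T" using Tne by blast
    define y where "y i = (of_int (m i) - of_int \<mu>0) * x i" for i
    have "(\<Sum>i\<in>UNIV. y i *s v i) = (\<Sum>i\<in>UNIV. x i *s (R *v v i)) - (\<Sum>i\<in>UNIV. (of_int \<mu>0 * x i) *s v i)"
      by (simp add: y_def ev sum_subtractf[symmetric] vector_sadd_rdistrib vector_sub_rdistrib
          vector_smult_assoc algebra_simps)
    also have "(\<Sum>i\<in>UNIV. x i *s (R *v v i)) = R *v (\<Sum>i\<in>UNIV. x i *s v i)"
      by (simp add: mv_sum mv_scale)
    also have "(\<Sum>i\<in>UNIV. (of_int \<mu>0 * x i) *s v i) = (\<Sum>i\<in>UNIV. of_int \<mu>0 *s (x i *s v i))"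
      by (simp add: vector_smult_assoc)
    also have "\<dots> = 0" using sum_smult[OF less.prems(2)] by simp
    finally have ysum: "(\<Sum>i\<in>UNIV. y i *s v i) = 0" using less.prems(2) by simp
    have supp: "{i. y i \<noteq> 0} = {i. x i \<noteq> 0 \<and> m i \<noteq> \<mu>0}"
      by (auto simp: y_def)
    have Ty: "m ` {i. y i \<noteq> 0} = T - {\<mu>0}"
      unfolding supp T_def by auto
    have lt: "card (m ` {i. y i \<noteq> 0}) < card (m ` {i. x i \<noteq> 0})"
      unfolding Ty T_def[symmetric] using card_Diff1_less[OF finT mu0] by simp
    have "T - {\<mu>0} \<noteq> {}"
      using False mu0 finT by (metis card_le_Suc0_iff_eq One_nat_def insert_Diff insert_iff empty_iff)
    hence "\<exists>i. y i \<noteq> 0" using Ty by auto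
    from less.hyps[OF lt this ysum] show ?thesis .
  qed
qed


definition indep :: "('n \<Rightarrow> complex^'n) \<Rightarrow> bool" where
  "indep v \<longleftrightarrow> (\<forall>x. (\<Sum>i\<in>UNIV. x i *s v i) = 0 \<longrightarrow> (\<forall>i. x i = 0))"

lemma indep_nz: "indep v \<Longrightarrow> v i \<noteq> 0"
proof
  assume "indep v" "v i = 0"
  have "(\<Sum>j\<in>UNIV. (\<lambda>j. if j = i then 1 else 0::complex) j *s v j) = (\<Sum>j\<in>UNIV. if j = i then v j else 0)"
    by (intro sum.cong) auto
  hence "(\<Sum>j\<in>UNIV. (\<lambda>j. if j = i then 1 else 0::complex) j *s v j) = 0"
    using \<open>v i = 0\<close> by simp
  from \<open>indep v\<close>[unfolded indep_def, rule_format, OF this, of i] show False by simp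
qed

lemma indep_update:
  fixes c :: "'n::finite \<Rightarrow> complex^'n"
  assumes ind: "indep c" and xj: "x j \<noteq> 0"
  shows "indep (c(j := (\<Sum>i\<in>UNIV. x i *s c i)))"
  unfolding indep_def
proof (rule allI, rule impI)
  fix y :: "'n \<Rightarrow> complex"
  let ?c' = "\<Sum>i\<in>UNIV. x i *s c i"
  assume h: "(\<Sum>i\<in>UNIV. y i *s (c(j := ?c')) i) = 0"
  define z where "z i = (if i = j then 0 else y i) + y j * x i" for i
  have "(\<Sum>i\<in>UNIV. y i *s (c(j := ?c')) i)
      = (\<Sum>i\<in>UNIV. (if i = j then 0 else y i *s c i) + (if i = j then y j *s ?c' else 0))"
    by (intro sum.cong) auto
  also have "\<dots> = (\<Sum>i\<in>UNIV. (if i = j then 0 else y i) *s c i) + (\<Sum>i\<in>UNIV. if i = j then y j *s ?c' else 0)"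
    by (subst sum.distrib[symmetric]) (intro sum.cong, auto)
  also have "(\<Sum>i\<in>UNIV. if i = j then y j *s ?c' else 0) = y j *s ?c'"
    by simp
  also have "y j *s ?c' = (\<Sum>i\<in>UNIV. (y j * x i) *s c i)"
  proof -
    have "y j *s ?c' = (\<Sum>i\<in>UNIV. y j *s (x i *s c i))"
      by (rule sum_cmul[symmetric])
    then show ?thesis by simp
  qed
  also have "(\<Sum>i\<in>UNIV. (if i = j then 0 else y i) *s c i) + \<dots> = (\<Sum>i\<in>UNIV. z i *s c i)"
    by (simp add: z_def sum.distrib vector_sadd_rdistrib)
  finally have "(\<Sum>i\<in>UNIV. z i *s c i) = 0" using h by simp
  hence z0: "\<forall>i. z i = 0" using ind unfolding indep_def by blast
  hence "y j = 0" using z0[rule_format, of j] xj by (simp add: z_def)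
  then show "\<forall>i. y i = 0" using z0 by (auto simp: z_def split: if_splits)
qed

lemma indep_axis: "indep (\<lambda>i. axis i (1::complex) :: complex^'n::finite)"
  unfolding indep_def
proof (intro allI impI)
  fix x :: "'n \<Rightarrow> complex" and i assume h: "(\<Sum>i\<in>UNIV. x i *s (axis i 1 :: complex^'n)) = 0"
  have eq: "\<And>j. x j * (if i = j then 1 else 0) = (if i = j then x j else (0::complex))" by simp
  have "(\<Sum>j\<in>UNIV. x j *s (axis j 1 :: complex^'n)) $ i = x i"
    by (simp add: axis_def eq)
  then show "x i = 0" using h by simp
qed

lemma alg_main:
  fixes B :: "int \<Rightarrow> complex^'n^'n" and R :: "complex^'n^'n"
  assumes K1: "\<And>c m. ordge B c m \<Longrightarrow> R *v (B m *v c) = of_int m *s (B m *v c)"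
    and K2: "\<And>c. c \<noteq> 0 \<Longrightarrow> \<exists>k. B k *v c \<noteq> 0"
    and K3: "\<And>k. k < K \<Longrightarrow> B k = 0"
  shows "\<exists>L (m::'n \<Rightarrow> int). invertible L \<and> (\<forall>i. R *v column i L = of_int (m i) *s column i L)"
proof -
  obtain M where Mb: "\<And>c \<mu>. c \<noteq> 0 \<Longrightarrow> ordge B c \<mu> \<Longrightarrow> \<mu> \<le> M"
    using bound_exists[OF K2] by blast
  define adm where "adm c m \<longleftrightarrow> indep c \<and> (\<forall>i. K \<le> m i \<and> ordge B (c i) (m i))"
    for c :: "'n \<Rightarrow> complex^'n" and m :: "'n \<Rightarrow> int"
  define S where "S = {sum m UNIV | c m. adm c m}"
  have S_sub: "S \<subseteq> {of_nat CARD('n) * K .. of_nat CARD('n) * M}"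
  proof
    fix s assume "s \<in> S"
    then obtain c m where s: "s = sum m UNIV" and a: "adm c m" by (auto simp: S_def)
    have "m i \<le> M" for i using a indep_nz[of c i] Mb by (auto simp: adm_def)
    hence "sum m UNIV \<le> of_nat CARD('n) * M" using sum_bounded_above[of UNIV m M] by simp
    moreover have "of_nat CARD('n) * K \<le> sum m UNIV"
      using a sum_bounded_below[of UNIV K m] by (auto simp: adm_def)
    ultimately show "s \<in> {of_nat CARD('n) * K .. of_nat CARD('n) * M}" using s by simp
  qed
  hence finS: "finite S" by (rule finite_subset) simp
  have adm0: "adm (\<lambda>i. axis i 1) (\<lambda>i. K)"
  proof -
    have "indep (\<lambda>i. axis i (1::complex) :: complex^'n)" by (rule indep_axis)
    moreover have "ordge B (axis i 1) K" for i using K3 by (simp add: ordge_def)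
    ultimately show ?thesis by (simp add: adm_def)
  qed
  hence "S \<noteq> {}" by (auto simp: S_def)
  define s0 where "s0 = Max S"
  have "s0 \<in> S" using finS \<open>S \<noteq> {}\<close> by (simp add: s0_def)
  then obtain c m where adm: "adm c m" and s0: "sum m UNIV = s0" by (auto simp: S_def)
  have maxi: "sum m' UNIV \<le> sum m UNIV" if "adm c' m'" for c' m'
  proof -
    have "sum m' UNIV \<in> S" using that unfolding S_def by blast
    hence "sum m' UNIV \<le> Max S" by (rule Max_ge[OF finS])
    then show ?thesis using s0 s0_def by simp
  qed
  have bump: "sum (\<lambda>i. m i + (if i = j then 1 else 0)) UNIV = sum m UNIV + 1" for j
    by (simp add: sum.distrib)
  define lc where "lc i = B (m i) *v c i" for i
  have lc_nz: "lc i \<noteq> 0" for i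
  proof
    assume z: "lc i = 0"
    have "ordge B (c j) (m j + (if j = i then 1 else 0))" for j
    proof (cases "j = i")
      case True
      have o: "ordge B (c i) (m i)" using adm by (simp add: adm_def)
      show ?thesis unfolding ordge_def
      proof (intro allI impI)
        fix k assume "k < m j + (if j = i then 1 else 0)"
        hence "k < m i \<or> k = m i" using True by auto
        then show "B k *v c j = 0"
          using o z True unfolding ordge_def lc_def by auto
      qed
    next
      case False
      then show ?thesis using adm by (simp add: adm_def)
    qed
    moreover have "K \<le> m j" for j using adm by (simp add: adm_def)
    hence "K \<le> m j + (if j = i then 1 else 0)" for j
      by (cases "j = i") (auto intro: order_trans[of K "m j"])
    ultimately have "adm c (\<lambda>j. m j + (if j = i then 1 else 0))"
      using adm by (auto simp: adm_def)
    from maxi[OF this] bump[of i] show False by simp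
  qed
  have ev: "R *v lc i = of_int (m i) *s lc i" for i
    using adm K1 by (simp add: adm_def lc_def)
  have ind: "indep lc"
    unfolding indep_def
  proof (rule ccontr)
    assume "\<not> (\<forall>x. (\<Sum>i\<in>UNIV. x i *s lc i) = 0 \<longrightarrow> (\<forall>i. x i = 0))"
    then obtain x where x: "(\<Sum>i\<in>UNIV. x i *s lc i) = 0" "\<exists>i. x i \<noteq> 0" by blast
    obtain x' \<mu> where x': "\<exists>i. x' i \<noteq> 0" "(\<Sum>i\<in>UNIV. x' i *s lc i) = 0" "\<forall>i. x' i \<noteq> 0 \<longrightarrow> m i = \<mu>"
      using level_reduce[of R lc m x, OF ev x(2) x(1)] by blast
    obtain j where j: "x' j \<noteq> 0" using x'(1) by blast
    define c' where "c' = (\<Sum>i\<in>UNIV. x' i *s c i)"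
    have Bc': "B k *v c' = (\<Sum>i\<in>UNIV. x' i *s (B k *v c i))" for k
      by (simp add: c'_def mv_sum mv_scale)
    have oc': "ordge B c' (\<mu> + 1)"
      unfolding ordge_def
    proof (intro allI impI)
      fix k assume "k < \<mu> + 1"
      hence "k < \<mu> \<or> k = \<mu>" by auto
      then show "B k *v c' = 0"
      proof
        assume "k < \<mu>"
        have zi: "x' i *s (B k *v c i) = 0" for i
        proof (cases "x' i = 0")
          case False
          then have "m i = \<mu>" using x'(3) by blast
          then show ?thesis using adm \<open>k < \<mu>\<close> by (simp add: adm_def ordge_def)
        qed simp
        show ?thesis by (simp only: Bc' zi sum.neutral_const)
      next
        assume "k = \<mu>"
        have zi: "x' i *s (B k *v c i) = x' i *s lc i" for i
        proof (cases "x' i = 0")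
          case False
          then have "m i = \<mu>" using x'(3) by blast
          then show ?thesis using \<open>k = \<mu>\<close> by (simp add: lc_def)
        qed simp
        show ?thesis using x'(2) by (simp only: Bc' zi)
      qed
    qed
    have mj: "m j = \<mu>" using x'(3) j by blast
    have "adm (c(j := c')) (\<lambda>i. m i + (if i = j then 1 else 0))"
      unfolding adm_def
    proof (intro conjI allI)
      show "indep (c(j := c'))" unfolding c'_def using indep_update[of c x' j] adm j by (simp add: adm_def)
      fix i
      have "K \<le> m i" using adm by (simp add: adm_def)
      then show "K \<le> m i + (if i = j then 1 else 0)" by (cases "i = j") auto
      show "ordge B ((c(j := c')) i) (m i + (if i = j then 1 else 0))"
        using adm oc' mj by (cases "i = j") (auto simp: adm_def)
    qed
    from maxi[OF this] bump[of j] show False by simp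
  qed
  define L where "L = (\<chi> a b. lc b $ a)"
  have colL: "column b L = lc b" for b by (simp add: L_def column_def vec_eq_iff)
  have Lv: "L *v y = (\<Sum>b\<in>UNIV. y $ b *s lc b)" for y by (simp add: matrix_mult_sum colL)
  have inj: "inj ((*v) L)"
  proof (rule injI)
    fix y1 y2 assume "L *v y1 = L *v y2"
    hence "L *v (y1 - y2) = 0" by (simp add: matrix_vector_mult_diff_distrib)
    hence "(\<Sum>b\<in>UNIV. (\<lambda>b. (y1 - y2) $ b) b *s lc b) = 0" by (simp add: Lv)
    hence "\<forall>b. (y1 - y2) $ b = 0" using ind unfolding indep_def by blast
    then show "y1 = y2" by (simp add: vec_eq_iff)
  qed
  have "surj ((*v) L)"
    by (rule vec.linear_inj_imp_surj[OF matrix_vector_mul_linear_gen inj])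
  with inj have "invertible L" by (simp add: invertible_eq_bij bij_def)
  then show ?thesis by (intro exI[of _ L] exI[of _ m]) (simp add: colL ev)
qed


lemma fls_prod_vanish:
  fixes E :: "complex fps" and w :: "complex fls"
  assumes "\<forall>k<m. fls_nth w k = 0"
  shows "fls_nth (fps_to_fls E * w) (m - 1) = 0"
proof (cases "fps_to_fls E * w = 0")
  case True show ?thesis unfolding True by simp
next
  case False
  hence nz: "fps_to_fls E \<noteq> 0" "w \<noteq> 0" by auto
  have "fls_subdegree (fps_to_fls E * w) \<ge> fls_subdegree (fps_to_fls E) + fls_subdegree w"
    using False by (rule fls_mult_subdegree_ge)
  moreover have "fls_subdegree (fps_to_fls E) \<ge> 0"
    by (rule fls_subdegree_ge0I) simp
  moreover have "fls_subdegree w \<ge> m"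
    using nz(2) assms by (intro fls_subdegree_geI) auto
  ultimately show ?thesis by (intro fls_eq0_below_subdegree) linarith
qed

lemma analytic_part:
  fixes W A0 :: "complex \<Rightarrow> complex^'n^'n" and R :: "complex^'n^'n"
  assumes r: "r > 0"
    and fund: "\<And>x. x \<in> ball x0 r - {x0} \<Longrightarrow> invertible (W x) \<and>
       (\<forall>i j. ((\<lambda>y. W y $ i $ j) has_field_derivative ((mscale (1/(x-x0)) R + A0 x) ** W x) $ i $ j) (at x))"
    and hol: "mat_holomorphic_on A0 (ball x0 r)"
    and ness: "\<And>i j. not_essential (\<lambda>x. W x $ i $ j) x0"
  shows "\<exists>B::int \<Rightarrow> complex^'n^'n. (\<forall>c m. ordge B c m \<longrightarrow> R *v (B m *v c) = of_int m *s (B m *v c))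
          \<and> (\<forall>c. c \<noteq> 0 \<longrightarrow> (\<exists>k. B k *v c \<noteq> 0)) \<and> (\<exists>K. \<forall>k<K. B k = 0)"
proof -
  define F where "F i j = laurent_expansion (\<lambda>x. W x $ i $ j) x0" for i j
  have iso: "isolated_singularity_at (\<lambda>x. W x $ i $ j) x0" for i j
  proof -
    have "(\<lambda>x. W x $ i $ j) holomorphic_on ball x0 r - {x0}"
      unfolding holomorphic_on_def using fund
      by (meson field_differentiable_at_within field_differentiable_def)
    hence "(\<lambda>x. W x $ i $ j) analytic_on ball x0 r - {x0}"
      by (simp add: analytic_on_open open_Diff)
    thus ?thesis unfolding isolated_singularity_at_def using r by blast
  qed
  have FW: "(\<lambda>t. W (x0 + t) $ i $ j) has_laurent_expansion F i j" for i j
    unfolding F_def using not_essential_has_laurent_expansion[OF iso ness] .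
  define E where "E i k = fps_expansion (\<lambda>x. A0 x $ i $ k) x0" for i k
  have FA: "(\<lambda>t. A0 (x0 + t) $ i $ k) has_laurent_expansion fps_to_fls (E i k)" for i k
  proof -
    have "(\<lambda>x. A0 x $ i $ k) analytic_on ball x0 r"
      using hol unfolding mat_holomorphic_on_def by (simp add: analytic_on_open)
    hence "(\<lambda>x. A0 x $ i $ k) analytic_on {x0}"
      using r analytic_on_subset by fastforce
    from analytic_at_imp_has_fps_expansion[OF this]
    show ?thesis unfolding E_def by (rule has_laurent_expansion_fps)
  qed
  define G where "G i k = fls_const (R$i$k) * fls_X_intpow (-1) + fps_to_fls (E i k)" for i k
  have dW: "fls_deriv (F i j) = (\<Sum>k\<in>UNIV. G i k * F k j)" for i j
  proof -
    have h1: "deriv (\<lambda>t. W (x0 + t) $ i $ j) has_laurent_expansion fls_deriv (F i j)"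
      by (rule has_laurent_expansion_deriv[OF FW])
    have h2: "(\<lambda>t. \<Sum>k\<in>UNIV. (R$i$k * t powi (-1) + A0 (x0 + t) $ i $ k) * W (x0+t) $ k $ j)
        has_laurent_expansion (\<Sum>k\<in>UNIV. G i k * F k j)"
      unfolding G_def by (intro has_laurent_expansion_sum has_laurent_expansion_mult has_laurent_expansion_add
          has_laurent_expansion_cmult_left has_laurent_expansion_fps_X_power_int FA FW)
    have ev: "eventually (\<lambda>t. (\<Sum>k\<in>UNIV. (R$i$k * t powi (-1) + A0 (x0 + t) $ i $ k) * W (x0+t) $ k $ j)
               = deriv (\<lambda>t. W (x0 + t) $ i $ j) t) (at 0)"
    proof -
      have "eventually (\<lambda>t. t \<in> ball 0 r - {0}) (at 0)"
        using r by (intro eventually_at_in_open) auto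
      then show ?thesis
      proof eventually_elim
        case (elim t)
        hence x: "x0 + t \<in> ball x0 r - {x0}" by (auto simp: dist_norm)
        have "((\<lambda>y. W y $ i $ j) has_field_derivative ((mscale (1/(x0+t-x0)) R + A0 (x0+t)) ** W (x0+t)) $ i $ j) (at (t + x0))"
          using fund[OF x] by (simp add: add.commute)
        hence "((\<lambda>s. W (s + x0) $ i $ j) has_field_derivative ((mscale (1/(x0+t-x0)) R + A0 (x0+t)) ** W (x0+t)) $ i $ j) (at t)"
          by (simp add: DERIV_shift)
        hence "deriv (\<lambda>s. W (x0 + s) $ i $ j) t = ((mscale (1/(x0+t-x0)) R + A0 (x0+t)) ** W (x0+t)) $ i $ j"
          by (simp add: add.commute DERIV_imp_deriv)
        also have "\<dots> = (\<Sum>k\<in>UNIV. (R$i$k * t powi (-1) + A0 (x0 + t) $ i $ k) * W (x0+t) $ k $ j)"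
          by (simp add: matrix_matrix_mult_def mscale_def power_int_minus divide_inverse mult.commute)
        finally show ?case by simp
      qed
    qed
    have "deriv (\<lambda>t. W (x0 + t) $ i $ j) has_laurent_expansion (\<Sum>k\<in>UNIV. G i k * F k j)"
      using has_laurent_expansion_cong[OF ev refl] h2 by blast
    then show ?thesis using h1 has_laurent_expansion_unique by blast
  qed
  define B where "B k = (\<chi> i j. fls_nth (F i j) k)" for k
  define wc where "wc c i = (\<Sum>j\<in>UNIV. F i j * fls_const (c$j))" for c :: "complex^'n" and i
  have wc_nth: "fls_nth (wc c i) k = (B k *v c) $ i" for c i k
    by (simp add: wc_def B_def matrix_vector_mult_def fls_nth_sum)
  have wc_deriv: "fls_deriv (wc c i) = (\<Sum>k\<in>UNIV. G i k * wc c k)" for c i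
  proof -
    have "fls_deriv (wc c i) = (\<Sum>j\<in>UNIV. fls_deriv (F i j) * fls_const (c$j))"
      by (simp add: wc_def fls_deriv_sum)
    also have "\<dots> = (\<Sum>j\<in>UNIV. \<Sum>k\<in>UNIV. G i k * F k j * fls_const (c$j))"
      by (simp add: dW sum_distrib_right)
    also have "\<dots> = (\<Sum>k\<in>UNIV. G i k * wc c k)"
      by (subst sum.swap) (simp add: wc_def sum_distrib_left mult.assoc)
    finally show ?thesis .
  qed
  have K1: "R *v (B m *v c) = of_int m *s (B m *v c)" if o: "ordge B c m" for c m
  proof -
    have z: "\<forall>k<m. fls_nth (wc c i) k = 0" for i
      using o by (simp add: ordge_def wc_nth)
    have "(R *v (B m *v c)) $ i = (of_int m *s (B m *v c)) $ i" for i
    proof -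
      have "of_int m * (B m *v c) $ i = fls_nth (fls_deriv (wc c i)) (m - 1)"
        by (simp add: wc_nth)
      also have "\<dots> = (\<Sum>k\<in>UNIV. fls_nth (G i k * wc c k) (m - 1))"
        by (simp add: wc_deriv fls_nth_sum)
      also have "\<dots> = (\<Sum>k\<in>UNIV. R$i$k * (B m *v c) $ k)"
      proof (rule sum.cong[OF refl])
        fix k
        have "fls_nth (G i k * wc c k) (m - 1) = R$i$k * fls_nth (fls_X_intpow (-1) * wc c k) (m - 1)
               + fls_nth (fps_to_fls (E i k) * wc c k) (m - 1)"
          by (simp add: G_def distrib_right mult.assoc)
        also have "\<dots> = R$i$k * (B m *v c) $ k"
        proof -
          have "fls_nth (fls_X_intpow (-1) * wc c k) (m - 1) = fls_nth (wc c k) m"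
            by (simp only: fls_X_intpow_times_conv_shift) simp
          then show ?thesis
            using fls_prod_vanish[OF z[of k], of "E i k"] by (simp add: wc_nth)
        qed
        finally show "fls_nth (G i k * wc c k) (m - 1) = R$i$k * (B m *v c) $ k" .
      qed
      finally show ?thesis by (simp add: matrix_vector_mult_def)
    qed
    then show ?thesis by (simp add: vec_eq_iff)
  qed
  have K2: "\<exists>k. B k *v c \<noteq> 0" if c: "c \<noteq> 0" for c
  proof (rule ccontr)
    assume "\<not> (\<exists>k. B k *v c \<noteq> 0)"
    hence z: "wc c i = 0" for i
      by (intro fls_eqI) (simp add: wc_nth)
    have e: "(\<lambda>t. \<Sum>j\<in>UNIV. W (x0 + t) $ i $ j * c$j) has_laurent_expansion wc c i" for i
      unfolding wc_def by (intro has_laurent_expansion_sum has_laurent_expansion_cmult_right FW)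
    have ev: "eventually (\<lambda>t. eval_fls (wc c i) t = (\<Sum>j\<in>UNIV. W (x0 + t) $ i $ j * c$j)) (at 0)" for i
      using e[of i] unfolding has_laurent_expansion_def by blast
    have "eventually (\<lambda>t. (\<Sum>j\<in>UNIV. W (x0 + t) $ i $ j * c$j) = 0) (at 0)" for i
      using ev[of i] by (rule eventually_mono) (simp add: z)
    hence "eventually (\<lambda>t. \<forall>i. (\<Sum>j\<in>UNIV. W (x0 + t) $ i $ j * c$j) = 0) (at 0)"
      by (simp add: eventually_all_finite)
    moreover have "eventually (\<lambda>t. t \<in> ball 0 r - {0}) (at 0)"
      using r by (intro eventually_at_in_open) auto
    ultimately have "eventually (\<lambda>t. t \<in> ball 0 r - {0} \<and> (\<forall>i. (\<Sum>j\<in>UNIV. W (x0 + t) $ i $ j * c$j) = 0)) (at 0)"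
      by eventually_elim auto
    then obtain t where t: "t \<in> ball 0 r - {0}" "\<forall>i. (\<Sum>j\<in>UNIV. W (x0 + t) $ i $ j * c$j) = 0"
      using eventually_happens'[OF at_neq_bot] by blast
    have x: "x0 + t \<in> ball x0 r - {x0}" using t(1) by (auto simp: dist_norm)
    have Wc: "W (x0 + t) *v c = 0"
      using t(2) by (simp add: vec_eq_iff matrix_vector_mult_def)
    obtain A' where "A' ** W (x0 + t) = mat 1"
      using fund[OF x] unfolding invertible_def by blast
    hence "c = A' *v (W (x0 + t) *v c)"
      by (metis matrix_vector_mul_assoc matrix_vector_mul_lid)
    with Wc c show False by simp
  qed
  have K3: "\<exists>K. \<forall>k<K. B k = 0"
  proof -
    define K where "K = Min (range (\<lambda>p. fls_subdegree (F (fst p) (snd p))))"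
    have "B k = 0" if "k < K" for k
    proof -
      have "K \<le> fls_subdegree (F i j)" for i j
        unfolding K_def by (rule Min_le) (auto intro: image_eqI[of _ _ "(i,j)"])
      hence "fls_nth (F i j) k = 0" for i j
        using that by (intro fls_eq0_below_subdegree) (meson less_le_trans)
      then show ?thesis by (simp add: B_def vec_eq_iff)
    qed
    then show ?thesis by blast
  qed
  have G1: "\<forall>c m. ordge B c m \<longrightarrow> R *v (B m *v c) = of_int m *s (B m *v c)"
    using K1 by blast
  have G2: "\<forall>c. c \<noteq> 0 \<longrightarrow> (\<exists>k. B k *v c \<noteq> 0)"
    using K2 by blast
  from G1 G2 K3 show ?thesis by (intro exI[of _ B] conjI)
qed


primrec mpow :: "'a::semiring_1^'n^'n \<Rightarrow> nat \<Rightarrow> 'a^'n^'n" where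
  "mpow M 0 = mat 1"
| "mpow M (Suc k) = M ** mpow M k"

lemma diag_facts:
  fixes R L :: "complex^'n^'n" and m :: "'n \<Rightarrow> int"
  assumes inv: "invertible L" and col: "\<forall>i. R *v column i L = of_int (m i) *s column i L"
  shows "mat_eigenvalue R l \<longleftrightarrow> l \<in> of_int ` range m"
    and "trace (mpow R k) = of_int (\<Sum>i\<in>UNIV. m i ^ k)"
proof -
  obtain L' where LL': "L ** L' = mat 1" and L'L: "L' ** L = mat 1"
    using inv unfolding invertible_def by blast
  define D :: "complex^'n^'n" where "D = (\<chi> i j. if i = j then of_int (m i) else 0)"
  have RL: "R ** L = L ** D"
  proof -
    have "(R ** L) $ a $ b = (L ** D) $ a $ b" for a b
    proof -
      have "(R ** L) $ a $ b = (R *v column b L) $ a"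
        by (simp add: matrix_matrix_mult_def matrix_vector_mult_def column_def)
      also have "\<dots> = of_int (m b) * L $ a $ b" using col by (simp add: column_def)
      also have "\<dots> = (L ** D) $ a $ b"
        by (simp add: matrix_matrix_mult_def D_def if_distrib mult.commute cong: if_cong)
      finally show ?thesis .
    qed
    then show ?thesis by (simp add: vec_eq_iff)
  qed
  have powD: "mpow D k = (\<chi> i j. if i = j then of_int (m i) ^ k else 0)" for k
  proof (induction k)
    case 0 then show ?case by (simp add: mat_def vec_eq_iff)
  next
    case (Suc k)
    have "(D ** mpow D k) $ a $ b = (if a = b then of_int (m a) ^ Suc k else 0)" for a b
    proof -
      have "(D ** mpow D k) $ a $ b = (\<Sum>c\<in>UNIV. D $ a $ c * (if c = b then of_int (m c) ^ k else 0))"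
        by (simp add: Suc.IH matrix_matrix_mult_def)
      also have "\<dots> = (\<Sum>c\<in>UNIV. if c = a then (if a = b then of_int (m a) ^ Suc k else 0) else 0)"
        by (intro sum.cong) (auto simp: D_def)
      also have "\<dots> = (if a = b then of_int (m a) ^ Suc k else 0)" by simp
      finally show ?thesis .
    qed
    then show ?case by (simp add: vec_eq_iff)
  qed
  have powRL: "mpow R k ** L = L ** mpow D k" for k
  proof (induction k)
    case 0 then show ?case by simp
  next
    case (Suc k)
    have "mpow R (Suc k) ** L = R ** (mpow R k ** L)" by (simp add: matrix_mul_assoc)
    also have "\<dots> = (R ** L) ** mpow D k" by (simp add: Suc matrix_mul_assoc)
    also have "\<dots> = L ** mpow D (Suc k)" by (simp add: RL matrix_mul_assoc)
    finally show ?case .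
  qed
  have "trace (mpow R k) = trace (mpow R k ** L ** L')"
    by (metis LL' matrix_mul_assoc matrix_mul_rid)
  also have "\<dots> = trace (L ** (mpow D k ** L'))" by (metis powRL matrix_mul_assoc)
  also have "\<dots> = trace ((mpow D k ** L') ** L)" by (rule trace_mul_sym)
  also have "\<dots> = trace (mpow D k)" by (metis L'L matrix_mul_assoc matrix_mul_rid)
  also have "\<dots> = of_int (\<Sum>i\<in>UNIV. m i ^ k)" by (simp add: powD trace_def)
  finally show "trace (mpow R k) = of_int (\<Sum>i\<in>UNIV. m i ^ k)" .
  have injL: "L *v y = 0 \<Longrightarrow> y = 0" for y
    by (metis L'L matrix_vector_mul_assoc matrix_vector_mul_lid matrix_vector_mult_0_right)
  show "mat_eigenvalue R l \<longleftrightarrow> l \<in> of_int ` range m"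
  proof
    assume "mat_eigenvalue R l"
    then obtain v where v: "v \<noteq> 0" "R *v v = l *s v" unfolding mat_eigenvalue_def by blast
    define z where "z = L' *v v"
    have vz: "v = L *v z" by (simp add: z_def matrix_vector_mul_assoc LL')
    have "z \<noteq> 0" using v(1) vz by auto
    then obtain b where b: "z $ b \<noteq> 0" by (auto simp: vec_eq_iff)
    have "L *v (D *v z) = L *v (l *s z)"
    proof -
      have "L *v (D *v z) = (R ** L) *v z" by (simp add: RL matrix_vector_mul_assoc)
      also have "\<dots> = R *v v" by (simp add: vz matrix_vector_mul_assoc)
      also have "\<dots> = l *s v" by (rule v(2))
      also have "\<dots> = L *v (l *s z)" by (simp add: vz mv_scale)
      finally show ?thesis .
    qed
    hence "L *v (D *v z - l *s z) = 0" by (simp add: matrix_vector_mult_diff_distrib)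
    hence "D *v z - l *s z = 0" by (rule injL)
    hence "D *v z = l *s z" by simp
    hence "(D *v z) $ b = l * z $ b" by simp
    moreover have "(D *v z) $ b = of_int (m b) * z $ b"
    proof -
      have "(D *v z) $ b = (\<Sum>j\<in>UNIV. if j = b then of_int (m b) * z $ b else 0)"
        unfolding matrix_vector_mult_def D_def vec_lambda_beta by (rule sum.cong) auto
      then show ?thesis by simp
    qed
    ultimately have "l = of_int (m b)" using b by simp
    then show "l \<in> of_int ` range m" by blast
  next
    assume "l \<in> of_int ` range m"
    then obtain b where l: "l = of_int (m b)" by blast
    have cb: "column b L = L *v axis b 1"
    proof -
      have "(L *v axis b 1) $ a = L $ a $ b" for a
      proof -
        have "(L *v axis b 1) $ a = (\<Sum>j\<in>UNIV. if j = b then L $ a $ b else 0)"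
          unfolding matrix_vector_mult_def axis_def vec_lambda_beta by (rule sum.cong) auto
        then show ?thesis by simp
      qed
      then show ?thesis by (simp add: vec_eq_iff column_def)
    qed
    have "column b L \<noteq> 0"
    proof
      assume "column b L = 0"
      hence "L *v axis b 1 = 0" using cb by simp
      hence "axis b (1::complex) = 0" by (rule injL)
      then show False by (simp add: axis_eq_0_iff)
    qed
    then show "mat_eigenvalue R l" unfolding mat_eigenvalue_def using col l by blast
  qed
qed

lemma powersum_range_sub:
  fixes a b :: "'n::finite \<Rightarrow> int"
  assumes ps: "\<And>k. (\<Sum>i\<in>UNIV. a i ^ k) = (\<Sum>i\<in>UNIV. b i ^ k)"
  shows "range a \<subseteq> range b"
proof
  fix \<mu> assume "\<mu> \<in> range a"
  then obtain i0 where i0: "\<mu> = a i0" by blast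
  show "\<mu> \<in> range b"
  proof (rule ccontr)
    assume nb: "\<mu> \<notin> range b"
    define p :: "int poly" where "p = (\<Prod>j\<in>UNIV. [:- b j, 1:] ^ 2)"
    have pv: "poly p x = (\<Prod>j\<in>UNIV. (x - b j) ^ 2)" for x
      by (simp add: p_def poly_prod)
    have ev: "(\<Sum>i\<in>UNIV. poly p (c i)) = (\<Sum>k\<le>degree p. coeff p k * (\<Sum>i\<in>UNIV. c i ^ k))" for c :: "'n \<Rightarrow> int"
      by (simp add: poly_altdef sum_distrib_left) (rule sum.swap)
    have "(\<Sum>i\<in>UNIV. poly p (a i)) = (\<Sum>i\<in>UNIV. poly p (b i))"
      by (simp add: ev ps)
    also have "\<dots> = 0"
    proof (rule sum.neutral, rule ballI)
      fix i show "poly p (b i) = 0" unfolding pv by (rule prod_zero) auto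
    qed
    finally have s0: "(\<Sum>i\<in>UNIV. poly p (a i)) = 0" .
    have nn: "0 \<le> poly p x" for x by (simp add: pv prod_nonneg)
    have "poly p \<mu> \<noteq> 0" using nb by (auto simp: pv)
    hence "0 < poly p (a i0)" using nn[of \<mu>] i0 by simp
    also have "poly p (a i0) \<le> (\<Sum>i\<in>UNIV. poly p (a i))"
      by (rule member_le_sum) (simp_all add: nn)
    finally show False using s0 by simp
  qed
qed

lemma cont_mpow:
  fixes F :: "complex \<Rightarrow> complex^'n^'n"
  assumes "\<And>i j. continuous_on UNIV (\<lambda>\<rho>. F \<rho> $ i $ j)"
  shows "continuous_on UNIV (\<lambda>\<rho>. mpow (F \<rho>) k $ i $ j)"
proof (induction k arbitrary: i j)
  case 0 then show ?case by (simp add: mat_def)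
next
  case (Suc k)
  then show ?case
    by (simp add: matrix_matrix_mult_def) (intro continuous_intros assms Suc)
qed


theorem proposition5p1:
  fixes P Q P0 Q0 :: "complex \<Rightarrow> complex^'n^'n"
    and pm1 qm1 :: "complex^'n^'n"
    and x0 :: complex and r :: real
  assumes "r > 0"
    and "mat_holomorphic_on P0 (ball x0 r)"
    and "mat_holomorphic_on Q0 (ball x0 r)"
    and "\<And>x. x \<in> ball x0 r - {x0} \<Longrightarrow> P x = mscale (1 / (x - x0)) pm1 + P0 x"
    and "\<And>x. x \<in> ball x0 r - {x0} \<Longrightarrow> Q x = mscale (1 / (x - x0)) qm1 + Q0 x"
    and "\<And>\<rho>::complex. strong_regular_point (\<lambda>x. P x + mscale \<rho> (Q x)) x0"
  shows "(\<forall>\<rho>::complex. \<forall>l. mat_eigenvalue (pm1 + mscale \<rho> qm1) l \<longrightarrow> l \<in> \<int>)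
       \<and> (\<forall>\<rho>1 \<rho>2::complex. {l. mat_eigenvalue (pm1 + mscale \<rho>1 qm1) l}
                         = {l. mat_eigenvalue (pm1 + mscale \<rho>2 qm1) l})"
proof -
  have key: "\<exists>L (m::'n \<Rightarrow> int). invertible L \<and>
      (\<forall>i. (pm1 + mscale \<rho> qm1) *v column i L = of_int (m i) *s column i L)" for \<rho>
  proof -
    from assms(6)[of \<rho>] obtain r1 and W :: "complex \<Rightarrow> complex^'n^'n" where r1: "r1 > 0"
      and fs: "fundamental_solution_on (\<lambda>x. P x + mscale \<rho> (Q x)) W (ball x0 r1 - {x0})"
      and ne: "\<forall>i j. not_essential (\<lambda>x. W x $ i $ j) x0"
      unfolding strong_regular_point_def by blast
    define r' where "r' = min r r1"
    define A0 where "A0 x = P0 x + mscale \<rho> (Q0 x)" for x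
    have eqA: "P x + mscale \<rho> (Q x) = mscale (1/(x-x0)) (pm1 + mscale \<rho> qm1) + A0 x"
      if "x \<in> ball x0 r - {x0}" for x
      using assms(4)[OF that] assms(5)[OF that]
      by (simp add: A0_def mscale_def vec_eq_iff algebra_simps)
    have fund: "invertible (W x) \<and> (\<forall>i j. ((\<lambda>y. W y $ i $ j) has_field_derivative
        ((mscale (1/(x-x0)) (pm1 + mscale \<rho> qm1) + A0 x) ** W x) $ i $ j) (at x))"
      if "x \<in> ball x0 r' - {x0}" for x
    proof -
      have x1: "x \<in> ball x0 r1 - {x0}" and x2: "x \<in> ball x0 r - {x0}"
        using that by (auto simp: r'_def)
      from fs x1 have "invertible (W x) \<and> (\<forall>i j. ((\<lambda>y. W y $ i $ j) has_field_derivative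
          ((P x + mscale \<rho> (Q x)) ** W x) $ i $ j) (at x))"
        unfolding fundamental_solution_on_def by blast
      then show ?thesis using eqA[OF x2] by simp
    qed
    have hol: "mat_holomorphic_on A0 (ball x0 r')"
      unfolding mat_holomorphic_on_def
    proof (intro allI)
      fix i j
      have "(\<lambda>x. P0 x $ i $ j) holomorphic_on ball x0 r" "(\<lambda>x. Q0 x $ i $ j) holomorphic_on ball x0 r"
        using assms(2,3) unfolding mat_holomorphic_on_def by auto
      hence "(\<lambda>x. P0 x $ i $ j + \<rho> * Q0 x $ i $ j) holomorphic_on ball x0 r"
        by (intro holomorphic_intros)
      hence "(\<lambda>x. A0 x $ i $ j) holomorphic_on ball x0 r" by (simp add: A0_def mscale_def)
      then show "(\<lambda>x. A0 x $ i $ j) holomorphic_on ball x0 r'"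
        by (rule holomorphic_on_subset) (auto simp: r'_def)
    qed
    have "r' > 0" using assms(1) r1 by (simp add: r'_def)
    have ness: "\<And>i j. not_essential (\<lambda>x. W x $ i $ j) x0" using ne by blast
    obtain B where
      K1: "\<forall>c m. ordge B c m \<longrightarrow> (pm1 + mscale \<rho> qm1) *v (B m *v c) = of_int m *s (B m *v c)"
      and K2: "\<forall>c. c \<noteq> 0 \<longrightarrow> (\<exists>k. B k *v c \<noteq> 0)" and K3: "\<exists>K. \<forall>k<K. B k = 0"
      using analytic_part[OF \<open>r' > 0\<close> fund hol ness] by blast
    obtain K where K: "\<forall>k<K. B k = 0" using K3 by blast
    show ?thesis
      by (rule alg_main[of B "pm1 + mscale \<rho> qm1" K, OF K1[rule_format] K2[rule_format] K[rule_format]])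
  qed
  have "\<forall>\<rho>. \<exists>L. \<exists>m::'n \<Rightarrow> int. invertible L \<and>
      (\<forall>i. (pm1 + mscale \<rho> qm1) *v column i L = of_int (m i) *s column i L)"
    using key by blast
  from choice[OF this] obtain Lf where "\<forall>\<rho>. \<exists>m::'n \<Rightarrow> int. invertible (Lf \<rho>) \<and>
      (\<forall>i. (pm1 + mscale \<rho> qm1) *v column i (Lf \<rho>) = of_int (m i) *s column i (Lf \<rho>))"
    by blast
  from choice[OF this] obtain mf where LM0: "\<forall>\<rho>. invertible (Lf \<rho>) \<and>
      (\<forall>i. (pm1 + mscale \<rho> qm1) *v column i (Lf \<rho>) = of_int (mf \<rho> i) *s column i (Lf \<rho>))"
    by blast
  have LM: "invertible (Lf \<rho>) \<and>
      (\<forall>i. (pm1 + mscale \<rho> qm1) *v column i (Lf \<rho>) = of_int (mf \<rho> i) *s column i (Lf \<rho>))" for \<rho>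
    using LM0 by blast
  have eig: "mat_eigenvalue (pm1 + mscale \<rho> qm1) l \<longleftrightarrow> l \<in> of_int ` range (mf \<rho>)" for \<rho> l
    using LM[of \<rho>] diag_facts(1)[of "Lf \<rho>" "pm1 + mscale \<rho> qm1" "mf \<rho>" l] by blast
  have tr: "trace (mpow (pm1 + mscale \<rho> qm1) k) = of_int (\<Sum>i\<in>UNIV. mf \<rho> i ^ k)" for \<rho> k
    using LM[of \<rho>] diag_facts(2)[of "Lf \<rho>" "pm1 + mscale \<rho> qm1" "mf \<rho>" k] by blast
  have part1: "\<forall>\<rho>::complex. \<forall>l. mat_eigenvalue (pm1 + mscale \<rho> qm1) l \<longrightarrow> l \<in> \<int>"
    using eig by auto
  have ps: "(\<Sum>i\<in>UNIV. mf \<rho>1 i ^ k) = (\<Sum>i\<in>UNIV. mf \<rho>2 i ^ k)" for \<rho>1 \<rho>2 k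
  proof -
    define f where "f \<rho> = trace (mpow (pm1 + mscale \<rho> qm1) k)" for \<rho>
    have cont: "continuous_on UNIV f"
    proof -
      have ce: "continuous_on UNIV (\<lambda>\<rho>. (pm1 + mscale \<rho> qm1) $ i $ j)" for i j
        by (simp add: mscale_def) (intro continuous_intros)
      show ?thesis unfolding f_def trace_def
        by (intro continuous_on_sum cont_mpow ce)
    qed
    have "f constant_on UNIV"
    proof (rule continuous_discrete_range_constant[OF connected_UNIV cont])
      fix x :: complex
      show "\<exists>e>0. \<forall>y. y \<in> UNIV \<and> f y \<noteq> f x \<longrightarrow> e \<le> norm (f y - f x)"
      proof (intro exI[of _ 1] conjI allI impI)
        fix y assume "y \<in> UNIV \<and> f y \<noteq> f x"
        define a where "a = (\<Sum>i\<in>UNIV. mf y i ^ k)"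
        define b where "b = (\<Sum>i\<in>UNIV. mf x i ^ k)"
        have ab0: "f y = of_int a" "f x = of_int b" by (simp_all only: f_def tr a_def b_def)
        have ab: "f y = of_int a" "f x = of_int b" "a \<noteq> b"
          using ab0 \<open>y \<in> UNIV \<and> f y \<noteq> f x\<close> by auto
        have "norm (f y - f x) = norm (of_int (a - b) :: complex)" using ab by simp
        also have "\<dots> = \<bar>real_of_int (a - b)\<bar>" by (simp only: norm_of_int)
        finally show "1 \<le> norm (f y - f x)" using ab(3) by linarith
      qed simp
    qed
    then have "f \<rho>1 = f \<rho>2" unfolding constant_on_def by auto
    then show ?thesis using tr unfolding f_def by (metis of_int_eq_iff)
  qed
  have part2: "{l. mat_eigenvalue (pm1 + mscale \<rho>1 qm1) l} = {l. mat_eigenvalue (pm1 + mscale \<rho>2 qm1) l}"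
    for \<rho>1 \<rho>2 :: complex
  proof -
    have "range (mf \<rho>1) = range (mf \<rho>2)"
      using powersum_range_sub[of "mf \<rho>1" "mf \<rho>2"] powersum_range_sub[of "mf \<rho>2" "mf \<rho>1"] ps
      by (metis subset_antisym)
    then show ?thesis using eig by auto
  qed
  show ?thesis using part1 part2 by blast
qed

end
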